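(* The VC-dimension of the edge relation on the Hamming graph $H(d,q)$ equals $3$ if and only if at least one of the following holds: (1) $d\ge 3$ and $q\ge 3$; (2) $d\ge 2$ and $q\ge 4$; (3) $d\ge 4$ and $q\ge 2$.
   Context: For $d,q\in\mathbb N$ and a set $S$ with $|S|=q$, the Hamming graph $H(d,q)$ has vertex set $S^d$, two vertices adjacent iff they agree in all but exactly one coordinate. The VC-dimension of the edge relation on a graph $G$ is the largest size of a set $A\subseteq V(G)$ such that $\{A\cap N(v)\mid v\in V(G)\}$ equals the power set of $A$, where $N(v)$ is the set of vertices adjacent to $v$. *)

theory Defs
  imports Main
begin

definition hamming_vertices :: "nat \<Rightarrow> 'a set \<Rightarrow> 'a list set" where
  "hamming_vertices d S = {xs. length xs = d \<and> set xs \<subseteq> S}"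

definition hamming_adj :: "nat \<Rightarrow> 'a list \<Rightarrow> 'a list \<Rightarrow> bool" where
  "hamming_adj d xs ys \<longleftrightarrow> card {i. i < d \<and> xs ! i \<noteq> ys ! i} = 1"

definition nbhd :: "'v set \<Rightarrow> ('v \<Rightarrow> 'v \<Rightarrow> bool) \<Rightarrow> 'v \<Rightarrow> 'v set" where
  "nbhd V E v = {u \<in> V. E v u}"

definition edge_shatters :: "'v set \<Rightarrow> ('v \<Rightarrow> 'v \<Rightarrow> bool) \<Rightarrow> 'v set \<Rightarrow> bool" where
  "edge_shatters V E A \<longleftrightarrow> A \<subseteq> V \<and> (\<lambda>v. A \<inter> nbhd V E v) ` V = Pow A"

text \<open>VC-dimension of the edge relation: largest size of a shattered set
  (Sup on nat; 0 if nothing is shattered).\<close>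
definition vc_dim_edge :: "'v set \<Rightarrow> ('v \<Rightarrow> 'v \<Rightarrow> bool) \<Rightarrow> nat" where
  "vc_dim_edge V E = Sup {card A | A. edge_shatters V E A}"

end

theory Submission
  imports Defs
begin

definition adj' :: "nat \<Rightarrow> 'a list \<Rightarrow> 'a list \<Rightarrow> bool" where
  "adj' d x y \<longleftrightarrow> (\<exists>i<d. x!i \<noteq> y!i \<and> (\<forall>l<d. l \<noteq> i \<longrightarrow> x!l = y!l))"

lemma adj_eq: "hamming_adj d x y = adj' d x y"
proof
  assume "hamming_adj d x y"
  then obtain i where "{i. i < d \<and> x ! i \<noteq> y ! i} = {i}"
    using card_1_singleton_iff[THEN iffD1] unfolding hamming_adj_def One_nat_def by blast
  then show "adj' d x y" unfolding adj'_def by blast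
next
  assume "adj' d x y"
  then obtain i where "i<d" "x!i \<noteq> y!i" "\<forall>l<d. l \<noteq> i \<longrightarrow> x!l = y!l"
    unfolding adj'_def by blast
  then have "{i. i < d \<and> x ! i \<noteq> y ! i} = {i}" by blast
  then show "hamming_adj d x y" unfolding hamming_adj_def by simp
qed

lemma adj_sym: "adj' d x y = adj' d y x"
  unfolding adj'_def by metis

lemma adj_cong: "\<forall>l<d. w!l = v!l \<Longrightarrow> adj' d v x \<Longrightarrow> adj' d w x"
  unfolding adj'_def by metis

lemma line:
  assumes "i<d" "\<forall>l<d. l\<noteq>i \<longrightarrow> a!l = v!l" "\<forall>l<d. l\<noteq>i \<longrightarrow> b!l = v!l" "a!i \<noteq> b!i"
    "adj' d w a" "adj' d w b"
  shows "(\<forall>l<d. l\<noteq>i \<longrightarrow> w!l = v!l) \<and> w!i \<noteq> a!i \<and> w!i \<noteq> b!i"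
proof -
  obtain m where m: "m<d" "w!m \<noteq> a!m" "\<forall>l<d. l \<noteq> m \<longrightarrow> w!l = a!l"
    using assms(5) unfolding adj'_def by blast
  obtain n where n: "n<d" "w!n \<noteq> b!n" "\<forall>l<d. l \<noteq> n \<longrightarrow> w!l = b!l"
    using assms(6) unfolding adj'_def by blast
  have "n = i"
  proof (rule ccontr)
    assume "n \<noteq> i"
    then have "w!i = b!i" using n assms(1) by blast
    have "m = i" using m \<open>w!i = b!i\<close> assms(1,4) by metis
    then show False using n assms \<open>n \<noteq> i\<close> m by metis
  qed
  have "m = i"
  proof (rule ccontr)
    assume "m \<noteq> i"
    then have "w!i = a!i" using m assms(1) by blast
    then show False using m n \<open>n = i\<close> assms(1,2,3) \<open>m \<noteq> i\<close> by metis
  qed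
  show ?thesis using m n \<open>m = i\<close> \<open>n = i\<close> assms(2) by metis
qed


lemma tri1:
  assumes ij: "i<d" "j<d" "i\<noteq>j"
    and a: "\<forall>l<d. l\<noteq>i \<longrightarrow> a!l = v!l" "a!i \<noteq> v!i"
    and b: "\<forall>l<d. l\<noteq>j \<longrightarrow> b!l = v!l" "b!j \<noteq> v!j"
    and c: "k<d" "c!k \<noteq> v!k" "\<forall>l<d. l\<noteq>k \<longrightarrow> c!l = v!l"
    and ca: "\<not>(\<forall>l<d. c!l = a!l)" and cb: "\<not>(\<forall>l<d. c!l = b!l)"
    and w: "adj' d w a" "adj' d w b" "adj' d w c"
  shows "w!i = v!i"
proof (rule ccontr)
  assume wi: "w!i \<noteq> v!i"
  obtain m where m: "m<d" "w!m \<noteq> a!m" "\<forall>l<d. l \<noteq> m \<longrightarrow> w!l = a!l"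
    using w(1) unfolding adj'_def by blast
  obtain n where n: "n<d" "w!n \<noteq> b!n" "\<forall>l<d. l \<noteq> n \<longrightarrow> w!l = b!l"
    using w(2) unfolding adj'_def by blast
  obtain p where p: "p<d" "w!p \<noteq> c!p" "\<forall>l<d. l \<noteq> p \<longrightarrow> w!l = c!l"
    using w(3) unfolding adj'_def by blast
  have ni: "n = i" using n wi b ij by metis
  have wj: "w!j = b!j" using n ni ij by metis
  have mj: "m = j" using m wj a b ij by metis
  have wia: "w!i = a!i" using m mj ij by metis
  show False
  proof (cases "p = i")
    case True
    have "c!j = w!j" using p True ij by metis
    then have "k = j" using c wj b ij by metis
    then have "\<forall>l<d. c!l = b!l" using c b \<open>c!j = w!j\<close> wj by metis
    then show False using cb by blast
  next
    case False
    have "c!i = w!i" using p False ij by metis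
    then have "k = i" using c wi ij by metis
    then have "p = j" using c p wj b ij by metis
    have "\<forall>l<d. c!l = a!l" using c a \<open>c!i = w!i\<close> wia \<open>k = i\<close> by metis
    then show False using ca by blast
  qed
qed

lemma tri:
  assumes ij: "i<d" "j<d" "i\<noteq>j"
    and a: "\<forall>l<d. l\<noteq>i \<longrightarrow> a!l = v!l" "a!i \<noteq> v!i"
    and b: "\<forall>l<d. l\<noteq>j \<longrightarrow> b!l = v!l" "b!j \<noteq> v!j"
    and c: "k<d" "c!k \<noteq> v!k" "\<forall>l<d. l\<noteq>k \<longrightarrow> c!l = v!l"
    and ca: "\<not>(\<forall>l<d. c!l = a!l)" and cb: "\<not>(\<forall>l<d. c!l = b!l)"
    and w: "adj' d w a" "adj' d w b" "adj' d w c"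
  shows "\<forall>l<d. w!l = v!l"
proof -
  have wi: "w!i = v!i" by (rule tri1[OF assms])
  have wj: "w!j = v!j" by (rule tri1[of j d i b v a k c w]) (use assms in auto)
  obtain m where m: "m<d" "w!m \<noteq> a!m" "\<forall>l<d. l \<noteq> m \<longrightarrow> w!l = a!l"
    using w(1) unfolding adj'_def by blast
  obtain n where n: "n<d" "w!n \<noteq> b!n" "\<forall>l<d. l \<noteq> n \<longrightarrow> w!l = b!l"
    using w(2) unfolding adj'_def by blast
  show ?thesis
  proof (intro allI impI)
    fix l assume "l < d"
    show "w!l = v!l"
    proof (cases "l = i \<or> l = j")
      case True then show ?thesis using wi wj by blast
    next
      case False
      show ?thesis
      proof (rule ccontr)
        assume "w!l \<noteq> v!l"
        then have "l = m" using m a False \<open>l<d\<close> by metis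
        then show False using m a False wi ij by metis
      qed
    qed
  qed
qed


lemma neqV: "x \<in> hamming_vertices d S \<Longrightarrow> y \<in> hamming_vertices d S \<Longrightarrow> x \<noteq> y
  \<Longrightarrow> \<not>(\<forall>l<d. x!l = y!l)"
  unfolding hamming_vertices_def using nth_equalityI by force

lemma coord: "adj' d v x \<Longrightarrow> \<exists>i<d. x!i \<noteq> v!i \<and> (\<forall>l<d. l\<noteq>i \<longrightarrow> x!l = v!l)"
  unfolding adj'_def by metis

lemma same_coord:
  assumes "i<d" "\<forall>l<d. l\<noteq>i \<longrightarrow> x!l = v!l" "x!i \<noteq> v!i"
    and "j<d" "\<forall>l<d. l\<noteq>j \<longrightarrow> y!l = v!l" "y!j \<noteq> v!j"
    and "adj' d v z" "\<not>(\<forall>l<d. z!l = x!l)" "\<not>(\<forall>l<d. z!l = y!l)"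
    and "adj' d w x" "adj' d w y" "adj' d w z" "\<not> adj' d w t" "adj' d v t"
  shows "i = j"
proof (rule ccontr)
  assume "i \<noteq> j"
  obtain k where "k<d" "z!k \<noteq> v!k" "\<forall>l<d. l\<noteq>k \<longrightarrow> z!l = v!l" using coord[OF assms(7)] by blast
  then have "\<forall>l<d. w!l = v!l" using tri[of i d j x v y k z w] assms \<open>i \<noteq> j\<close> by blast
  then show False using adj_cong assms(13,14) by blast
qed

lemma no4:
  assumes V: "a \<in> hamming_vertices d S" "b \<in> hamming_vertices d S" "c \<in> hamming_vertices d S"
      "e \<in> hamming_vertices d S"
    and dist: "a \<noteq> b" "a \<noteq> c" "a \<noteq> e" "b \<noteq> c" "b \<noteq> e" "c \<noteq> e"
    and P: "\<And>B. B \<subseteq> {a,b,c,e} \<Longrightarrow> \<exists>w. \<forall>x\<in>{a,b,c,e}. adj' d w x = (x\<in>B)"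
  shows False
proof -
  have nq: "\<not>(\<forall>l<d. x!l = y!l)" if "x \<in> {a,b,c,e}" "y \<in> {a,b,c,e}" "x \<noteq> y" for x y
    using neqV that V by blast
  obtain v where v: "\<forall>x\<in>{a,b,c,e}. adj' d v x = (x\<in>{a,b,c,e})" using P[of "{a,b,c,e}"] by blast
  then have va: "adj' d v a" "adj' d v b" "adj' d v c" "adj' d v e" by auto
  obtain ia where ia: "ia<d" "a!ia \<noteq> v!ia" "\<forall>l<d. l\<noteq>ia \<longrightarrow> a!l = v!l" using coord[OF va(1)] by blast
  obtain ib where ib: "ib<d" "b!ib \<noteq> v!ib" "\<forall>l<d. l\<noteq>ib \<longrightarrow> b!l = v!l" using coord[OF va(2)] by blast
  obtain ic where ic: "ic<d" "c!ic \<noteq> v!ic" "\<forall>l<d. l\<noteq>ic \<longrightarrow> c!l = v!l" using coord[OF va(3)] by blast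
  obtain ie where ie: "ie<d" "e!ie \<noteq> v!ie" "\<forall>l<d. l\<noteq>ie \<longrightarrow> e!l = v!l" using coord[OF va(4)] by blast
  obtain w1 where w1: "\<forall>x\<in>{a,b,c,e}. adj' d w1 x = (x\<in>{a,b,c})" using P[of "{a,b,c}"] by blast
  then have w1': "adj' d w1 a" "adj' d w1 b" "adj' d w1 c" "\<not> adj' d w1 e" using dist by auto
  obtain w2 where w2: "\<forall>x\<in>{a,b,c,e}. adj' d w2 x = (x\<in>{a,b,e})" using P[of "{a,b,e}"] by blast
  then have w2': "adj' d w2 a" "adj' d w2 b" "adj' d w2 e" "\<not> adj' d w2 c" using dist by auto
  obtain w3 where w3: "\<forall>x\<in>{a,b,c,e}. adj' d w3 x = (x\<in>{a,b})" using P[of "{a,b}"] by blast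
  then have w3': "adj' d w3 a" "adj' d w3 b" "\<not> adj' d w3 e" "\<not> adj' d w3 c" using dist by auto
  have "ia = ib"
    by (rule same_coord[of ia d a v ib b c w1 e]) (use ia ib va w1' nq dist in auto)
  have "ia = ic"
    by (rule same_coord[of ia d a v ic c b w1 e]) (use ia ic va w1' nq dist in auto)
  have "ia = ie"
    by (rule same_coord[of ia d a v ie e b w2 c]) (use ia ie va w2' nq dist in auto)
  have ab: "a!ia \<noteq> b!ia"
  proof
    assume "a!ia = b!ia"
    then have "\<forall>l<d. a!l = b!l" using ia ib \<open>ia = ib\<close> by metis
    then show False using nq dist by blast
  qed
  have L: "(\<forall>l<d. l\<noteq>ia \<longrightarrow> w3!l = v!l)"
    using line[of ia d a v b w3] ia ib \<open>ia = ib\<close> ab w3' by blast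
  have "w3!ia = c!ia"
  proof (rule ccontr)
    assume "w3!ia \<noteq> c!ia"
    then have "adj' d w3 c" unfolding adj'_def using L ic \<open>ia = ic\<close> by metis
    then show False using w3' by blast
  qed
  moreover have "w3!ia = e!ia"
  proof (rule ccontr)
    assume "w3!ia \<noteq> e!ia"
    then have "adj' d w3 e" unfolding adj'_def using L ie \<open>ia = ie\<close> by metis
    then show False using w3' by blast
  qed
  ultimately have "\<forall>l<d. c!l = e!l" using ic ie \<open>ia = ic\<close> \<open>ia = ie\<close> by metis
  then show False using nq dist by blast
qed


lemma inS: "x \<in> hamming_vertices d S \<Longrightarrow> l < d \<Longrightarrow> x!l \<in> S"
  unfolding hamming_vertices_def by auto

lemma card2: "finite S \<Longrightarrow> x \<in> S \<Longrightarrow> y \<in> S \<Longrightarrow> x \<noteq> y \<Longrightarrow> 2 \<le> card S"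
  by (metis card_2_iff card_mono empty_subsetI insert_subset)

lemma card3: "finite S \<Longrightarrow> x \<in> S \<Longrightarrow> y \<in> S \<Longrightarrow> z \<in> S \<Longrightarrow> x \<noteq> y \<Longrightarrow> x \<noteq> z
  \<Longrightarrow> y \<noteq> z \<Longrightarrow> 3 \<le> card S"
proof -
  assume as: "finite S" "x \<in> S" "y \<in> S" "z \<in> S" "x \<noteq> y" "x \<noteq> z" "y \<noteq> z"
  then have "card {x,y,z} = 3" by simp
  moreover have "card {x,y,z} \<le> card S" using as by (intro card_mono) auto
  ultimately show ?thesis by simp
qed

lemma card4: "finite S \<Longrightarrow> x \<in> S \<Longrightarrow> y \<in> S \<Longrightarrow> z \<in> S \<Longrightarrow> t \<in> S \<Longrightarrow> x \<noteq> y \<Longrightarrow> x \<noteq> z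
  \<Longrightarrow> y \<noteq> z \<Longrightarrow> x \<noteq> t \<Longrightarrow> y \<noteq> t \<Longrightarrow> z \<noteq> t \<Longrightarrow> 4 \<le> card S"
proof -
  assume as: "finite S" "x \<in> S" "y \<in> S" "z \<in> S" "t \<in> S" "x \<noteq> y" "x \<noteq> z" "y \<noteq> z"
    "x \<noteq> t" "y \<noteq> t" "z \<noteq> t"
  then have "card {x,y,z,t} = 4" by simp
  moreover have "card {x,y,z,t} \<le> card S" using as by (intro card_mono) auto
  ultimately show ?thesis by simp
qed

lemma twoeq:
  assumes fin: "finite S"
    and V: "x \<in> hamming_vertices d S" "y \<in> hamming_vertices d S" "v \<in> hamming_vertices d S"
      "w \<in> hamming_vertices d S"
    and xy: "x \<noteq> y"
    and i: "i<d" "x!i \<noteq> v!i" "\<forall>l<d. l\<noteq>i \<longrightarrow> x!l = v!l"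
      "y!i \<noteq> v!i" "\<forall>l<d. l\<noteq>i \<longrightarrow> y!l = v!l"
    and k: "k<d" "k \<noteq> i"
    and z: "adj' d v z"
    and w: "adj' d w x" "adj' d w y" "\<not> adj' d w z"
  shows "4 \<le> card S \<and> 2 \<le> d"
proof -
  have xyi: "x!i \<noteq> y!i"
  proof
    assume "x!i = y!i"
    then have "\<forall>l<d. x!l = y!l" using i by metis
    then show False using neqV V xy by blast
  qed
  have L: "(\<forall>l<d. l\<noteq>i \<longrightarrow> w!l = v!l) \<and> w!i \<noteq> x!i \<and> w!i \<noteq> y!i"
    using line[of i d x v y w] i xyi w by blast
  have "w!i \<noteq> v!i"
  proof
    assume "w!i = v!i"
    then have "\<forall>l<d. w!l = v!l" using L by metis
    then show False using adj_cong z w by blast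
  qed
  then have "4 \<le> card S"
    using card4[OF fin inS[OF V(1) i(1)] inS[OF V(2) i(1)] inS[OF V(3) i(1)] inS[OF V(4) i(1)]]
      xyi i L by metis
  moreover have "2 \<le> d" using k i by linarith
  ultimately show ?thesis by blast
qed

lemma distcase:
  assumes i: "i<d" "x!i \<noteq> v!i" "\<forall>l<d. l\<noteq>i \<longrightarrow> x!l = v!l"
    and j: "j<d" "y!j \<noteq> v!j" "\<forall>l<d. l\<noteq>j \<longrightarrow> y!l = v!l"
    and ij: "i \<noteq> j"
    and w: "w!j \<noteq> x!j" "\<forall>l<d. l\<noteq>j \<longrightarrow> w!l = x!l" "\<not> adj' d w y"
  shows "w!j \<noteq> v!j \<and> w!j \<noteq> y!j"
proof
  show "w!j \<noteq> v!j" using w i ij j by metis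
  show "w!j \<noteq> y!j"
  proof
    assume "w!j = y!j"
    have "adj' d w y" unfolding adj'_def
    proof (intro exI[of _ i] conjI allI impI)
      show "i < d" by fact
      show "w!i \<noteq> y!i" using w(2) i j ij by metis
      fix l assume "l < d" "l \<noteq> i"
      then show "w!l = y!l" using \<open>w!j = y!j\<close> w(2) i j by metis
    qed
    then show False using w by blast
  qed
qed


lemma no3:
  assumes fin: "finite S"
    and V: "a \<in> hamming_vertices d S" "b \<in> hamming_vertices d S" "c \<in> hamming_vertices d S"
    and dist: "a \<noteq> b" "a \<noteq> c" "b \<noteq> c"
    and P: "\<And>B. B \<subseteq> {a,b,c} \<Longrightarrow> \<exists>w\<in>hamming_vertices d S. \<forall>x\<in>{a,b,c}. adj' d w x = (x\<in>B)"
  shows "(d \<ge> 3 \<and> card S \<ge> 3) \<or> (d \<ge> 2 \<and> card S \<ge> 4) \<or> (d \<ge> 4 \<and> card S \<ge> 2)"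
proof -
  have nq: "\<not>(\<forall>l<d. x!l = y!l)" if "x \<in> {a,b,c}" "y \<in> {a,b,c}" "x \<noteq> y" for x y
    using neqV that V by blast
  obtain v where vV: "v \<in> hamming_vertices d S" and v: "\<forall>x\<in>{a,b,c}. adj' d v x = (x\<in>{a,b,c})"
    using P[of "{a,b,c}"] by blast
  then have va: "adj' d v a" "adj' d v b" "adj' d v c" by auto
  obtain ia where ia: "ia<d" "a!ia \<noteq> v!ia" "\<forall>l<d. l\<noteq>ia \<longrightarrow> a!l = v!l" using coord[OF va(1)] by blast
  obtain ib where ib: "ib<d" "b!ib \<noteq> v!ib" "\<forall>l<d. l\<noteq>ib \<longrightarrow> b!l = v!l" using coord[OF va(2)] by blast
  obtain ic where ic: "ic<d" "c!ic \<noteq> v!ic" "\<forall>l<d. l\<noteq>ic \<longrightarrow> c!l = v!l" using coord[OF va(3)] by blast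
  obtain wa where waV: "wa \<in> hamming_vertices d S" and wa: "\<forall>x\<in>{a,b,c}. adj' d wa x = (x\<in>{a})"
    using P[of "{a}"] by blast
  then have wa': "adj' d wa a" "\<not> adj' d wa b" "\<not> adj' d wa c" using dist by auto
  obtain wab where wabV: "wab \<in> hamming_vertices d S" and wab: "\<forall>x\<in>{a,b,c}. adj' d wab x = (x\<in>{a,b})"
    using P[of "{a,b}"] by blast
  then have wab': "adj' d wab a" "adj' d wab b" "\<not> adj' d wab c" using dist by auto
  obtain wac where wacV: "wac \<in> hamming_vertices d S" and wac: "\<forall>x\<in>{a,b,c}. adj' d wac x = (x\<in>{a,c})"
    using P[of "{a,c}"] by blast
  then have wac': "adj' d wac a" "adj' d wac c" "\<not> adj' d wac b" using dist by auto
  obtain wbc where wbcV: "wbc \<in> hamming_vertices d S" and wbc: "\<forall>x\<in>{a,b,c}. adj' d wbc x = (x\<in>{b,c})"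
    using P[of "{b,c}"] by blast
  then have wbc': "adj' d wbc b" "adj' d wbc c" "\<not> adj' d wbc a" using dist by auto
  obtain m where m: "m<d" "wa!m \<noteq> a!m" "\<forall>l<d. l \<noteq> m \<longrightarrow> wa!l = a!l"
    using wa'(1) unfolding adj'_def by metis
  have q2: "2 \<le> card S" using card2[OF fin inS[OF V(1) ia(1)] inS[OF vV ia(1)]] ia by blast
  show ?thesis
  proof (cases "ia = ib \<and> ia = ic")
    case True
    have ab: "a!ia \<noteq> b!ia"
    proof
      assume "a!ia = b!ia"
      then have "\<forall>l<d. a!l = b!l" using ia ib True by metis
      then show False using nq[of a b] dist by blast
    qed
    have ac: "a!ia \<noteq> c!ia"
    proof
      assume "a!ia = c!ia"
      then have "\<forall>l<d. a!l = c!l" using ia ic True by metis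
      then show False using nq[of a c] dist by blast
    qed
    have bc: "b!ia \<noteq> c!ia"
    proof
      assume "b!ia = c!ia"
      then have "\<forall>l<d. b!l = c!l" using ib ic True by metis
      then show False using nq[of b c] dist by blast
    qed
    have "4 \<le> card S"
      using card4[OF fin inS[OF V(1) ia(1)] inS[OF V(2) ia(1)] inS[OF V(3) ia(1)] inS[OF vV ia(1)]]
        ab ac bc ia ib ic True by metis
    moreover have "m \<noteq> ia"
    proof
      assume "m = ia"
      have "wa!ia = b!ia"
      proof (rule ccontr)
        assume "wa!ia \<noteq> b!ia"
        then have "adj' d wa b" unfolding adj'_def using m ia ib True \<open>m = ia\<close> by metis
        then show False using wa' by blast
      qed
      moreover have "wa!ia = c!ia"
      proof (rule ccontr)
        assume "wa!ia \<noteq> c!ia"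
        then have "adj' d wa c" unfolding adj'_def using m ia ic True \<open>m = ia\<close> by metis
        then show False using wa' by blast
      qed
      ultimately show False using bc by simp
    qed
    then have "2 \<le> d" using m ia by linarith
    ultimately show ?thesis by blast
  next
    case F1: False
    show ?thesis
    proof (cases "ia = ib")
      case True
      then have "ic \<noteq> ia" using F1 by blast
      have "4 \<le> card S \<and> 2 \<le> d"
        by (rule twoeq[OF fin V(1) V(2) vV wabV dist(1), of ia ic c]) (use ia ib ic True \<open>ic \<noteq> ia\<close> va wab' in auto)
      then show ?thesis by blast
    next
      case F2: False
      show ?thesis
      proof (cases "ia = ic")
        case True
        then have "ib \<noteq> ia" using F2 by blast
        have "4 \<le> card S \<and> 2 \<le> d"
          by (rule twoeq[OF fin V(1) V(3) vV wacV dist(2), of ia ib b]) (use ia ib ic True \<open>ib \<noteq> ia\<close> va wac' in auto)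
        then show ?thesis by blast
      next
        case F3: False
        show ?thesis
        proof (cases "ib = ic")
          case True
          have "4 \<le> card S \<and> 2 \<le> d"
            by (rule twoeq[OF fin V(2) V(3) vV wbcV dist(3), of ib ia a]) (use ia ib ic True F2 va wbc' in auto)
          then show ?thesis by blast
        next
          case F4: False
          have d3: "3 \<le> d" using ia ib ic F2 F3 F4 by linarith
          show ?thesis
          proof (cases "m = ia \<or> m = ib \<or> m = ic")
            case False
            then have "4 \<le> d" using ia ib ic F2 F3 F4 m by linarith
            then show ?thesis using q2 by blast
          next
            case True
            have "3 \<le> card S"
            proof -
              { assume "m = ia"
                have "wa!ia \<noteq> v!ia"
                proof
                  assume "wa!ia = v!ia"
                  then have "\<forall>l<d. wa!l = v!l" using m ia \<open>m = ia\<close> by metis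
                  then show False using adj_cong va wa' by blast
                qed
                then have ?thesis
                  using card3[OF fin inS[OF V(1) ia(1)] inS[OF vV ia(1)] inS[OF waV ia(1)]] ia m \<open>m = ia\<close>
                  by metis }
              moreover
              { assume "m = ib"
                have "wa!ib \<noteq> v!ib \<and> wa!ib \<noteq> b!ib"
                  by (rule distcase[of ia d a v ib b]) (use ia ib F2 m \<open>m = ib\<close> wa' in auto)
                then have ?thesis
                  using card3[OF fin inS[OF V(2) ib(1)] inS[OF vV ib(1)] inS[OF waV ib(1)]] ib
                  by metis }
              moreover
              { assume "m = ic"
                have "wa!ic \<noteq> v!ic \<and> wa!ic \<noteq> c!ic"
                  by (rule distcase[of ia d a v ic c]) (use ia ic F3 m \<open>m = ic\<close> wa' in auto)
                then have ?thesis
                  using card3[OF fin inS[OF V(3) ic(1)] inS[OF vV ic(1)] inS[OF waV ic(1)]] ic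
                  by metis }
              ultimately show ?thesis using True by blast
            qed
            then show ?thesis using d3 by blast
          qed
        qed
      qed
    qed
  qed
qed


definition mk :: "nat \<Rightarrow> 'a \<Rightarrow> 'a \<Rightarrow> 'a \<Rightarrow> 'a \<Rightarrow> 'a \<Rightarrow> 'a list" where
  "mk d x0 X Y Z W = map (\<lambda>l. if l=0 then X else if l=1 then Y else if l=2 then Z else if l=3 then W else x0) [0..<d]"

lemma mk_nth: "l < d \<Longrightarrow> mk d x0 X Y Z W ! l = (if l=0 then X else if l=1 then Y else if l=2 then Z else if l=3 then W else x0)"
  unfolding mk_def by simp

lemma mk_V: "x0 \<in> S \<Longrightarrow> X \<in> S \<Longrightarrow> Y \<in> S \<Longrightarrow> Z \<in> S \<Longrightarrow> W \<in> S \<Longrightarrow> mk d x0 X Y Z W \<in> hamming_vertices d S"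
  unfolding mk_def hamming_vertices_def by auto

lemma mk_adj:
  assumes "2 \<le> d" "4 \<le> d \<or> (W = W' \<and> (3 \<le> d \<or> Z = Z'))"
  shows "adj' d (mk d x0 X Y Z W) (mk d x0 X' Y' Z' W') \<longleftrightarrow>
    (X\<noteq>X' \<and> Y=Y' \<and> Z=Z' \<and> W=W') \<or> (X=X' \<and> Y\<noteq>Y' \<and> Z=Z' \<and> W=W') \<or>
    (X=X' \<and> Y=Y' \<and> Z\<noteq>Z' \<and> W=W') \<or> (X=X' \<and> Y=Y' \<and> Z=Z' \<and> W\<noteq>W')"
    (is "?L \<longleftrightarrow> ?R")
proof
  assume ?L
  then obtain i where i: "i<d" "mk d x0 X Y Z W ! i \<noteq> mk d x0 X' Y' Z' W' ! i"
    "\<forall>l<d. l \<noteq> i \<longrightarrow> mk d x0 X Y Z W ! l = mk d x0 X' Y' Z' W' ! l"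
    unfolding adj'_def by blast
  have e0: "i \<noteq> 0 \<Longrightarrow> X = X'" using i(3)[rule_format, of 0] assms by (simp add: mk_nth)
  have e1: "i \<noteq> 1 \<Longrightarrow> Y = Y'" using i(3)[rule_format, of 1] assms by (simp add: mk_nth)
  have e2: "i \<noteq> 2 \<Longrightarrow> Z = Z'" using i(3)[rule_format, of 2] assms by (cases "3 \<le> d") (auto simp add: mk_nth)
  have e3: "i \<noteq> 3 \<Longrightarrow> W = W'" using i(3)[rule_format, of 3] assms by (cases "4 \<le> d") (auto simp add: mk_nth)
  have "i = 0 \<or> i = 1 \<or> i = 2 \<or> i = 3" using i(1,2) by (auto simp add: mk_nth split: if_splits)
  then show ?R using e0 e1 e2 e3 i(1,2) by (auto simp add: mk_nth)
next
  assume R: ?R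
  have "\<exists>i\<in>{0,1,2,3}. i<d \<and> mk d x0 X Y Z W ! i \<noteq> mk d x0 X' Y' Z' W' ! i
    \<and> (\<forall>l<d. l \<noteq> i \<longrightarrow> mk d x0 X Y Z W ! l = mk d x0 X' Y' Z' W' ! l)"
    using R assms by (auto simp add: mk_nth)
  then show ?L unfolding adj'_def by blast
qed


lemma shatter3:
  assumes V: "a \<in> V" "b \<in> V" "c \<in> V"
    and h0: "\<exists>w\<in>V. adj' d w a \<and> adj' d w b \<and> adj' d w c"
    and h1: "\<exists>w\<in>V. adj' d w a \<and> adj' d w b \<and> \<not> adj' d w c"
    and h2: "\<exists>w\<in>V. adj' d w a \<and> \<not> adj' d w b \<and> adj' d w c"
    and h3: "\<exists>w\<in>V. adj' d w a \<and> \<not> adj' d w b \<and> \<not> adj' d w c"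
    and h4: "\<exists>w\<in>V. \<not> adj' d w a \<and> adj' d w b \<and> adj' d w c"
    and h5: "\<exists>w\<in>V. \<not> adj' d w a \<and> adj' d w b \<and> \<not> adj' d w c"
    and h6: "\<exists>w\<in>V. \<not> adj' d w a \<and> \<not> adj' d w b \<and> adj' d w c"
    and h7: "\<exists>w\<in>V. \<not> adj' d w a \<and> \<not> adj' d w b \<and> \<not> adj' d w c"
  shows "edge_shatters V (hamming_adj d) {a,b,c}"
proof -
  have H0: "\<forall>pa pb pc. \<exists>w\<in>V. adj' d w a = pa \<and> adj' d w b = pb \<and> adj' d w c = pc"
    unfolding all_bool_eq eq_True eq_False using h0 h1 h2 h3 h4 h5 h6 h7 by blast
  have H: "\<exists>w\<in>V. adj' d w a = pa \<and> adj' d w b = pb \<and> adj' d w c = pc" for pa pb pc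
    using H0 by blast
  have "Pow {a,b,c} \<subseteq> (\<lambda>v. {a,b,c} \<inter> nbhd V (hamming_adj d) v) ` V"
  proof
    fix B assume "B \<in> Pow {a,b,c}"
    obtain w where w: "w \<in> V" "adj' d w a = (a \<in> B)" "adj' d w b = (b \<in> B)" "adj' d w c = (c \<in> B)"
      using H by blast
    have "{a,b,c} \<inter> nbhd V (hamming_adj d) w = {x \<in> {a,b,c}. adj' d w x}"
      using V unfolding nbhd_def adj_eq by blast
    also have "\<dots> = B"
    proof (intro set_eqI iffI)
      fix x assume "x \<in> {x \<in> {a,b,c}. adj' d w x}"
      then show "x \<in> B" using w by blast
    next
      fix x assume "x \<in> B"
      then have "x = a \<or> x = b \<or> x = c" using \<open>B \<in> Pow {a,b,c}\<close> by blast
      then show "x \<in> {x \<in> {a,b,c}. adj' d w x}" using w \<open>x \<in> B\<close> by blast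
    qed
    finally have "{a,b,c} \<inter> nbhd V (hamming_adj d) w = B" .
    then show "B \<in> (\<lambda>v. {a,b,c} \<inter> nbhd V (hamming_adj d) v) ` V" using w(1) by blast
  qed
  then show ?thesis unfolding edge_shatters_def using V by blast
qed


lemma mk_neq: "2 \<le> d \<Longrightarrow> X \<noteq> X' \<or> Y \<noteq> Y' \<Longrightarrow> mk d x0 X Y Z W \<noteq> mk d x0 X' Y' Z' W'"
proof
  assume "2 \<le> d" "X \<noteq> X' \<or> Y \<noteq> Y'" "mk d x0 X Y Z W = mk d x0 X' Y' Z' W'"
  then have "mk d x0 X Y Z W ! 0 = mk d x0 X' Y' Z' W' ! 0" "mk d x0 X Y Z W ! 1 = mk d x0 X' Y' Z' W' ! 1"
    by simp_all
  then show False using \<open>2 \<le> d\<close> \<open>X \<noteq> X' \<or> Y \<noteq> Y'\<close> by (simp add: mk_nth)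
qed

lemma cons1:
  assumes "3 \<le> d" and "x0 \<in> S" and "x1 \<in> S" and "x2 \<in> S" and "x0 \<noteq> x1" and "x0 \<noteq> x2" and "x1 \<noteq> x2"
  shows "\<exists>A. edge_shatters (hamming_vertices d S) (hamming_adj d) A \<and> card A = 3"
proof -
  let ?V = "hamming_vertices d S"
  have "edge_shatters ?V (hamming_adj d) {(mk d x0 x1 x0 x0 x0), (mk d x0 x0 x1 x0 x0), (mk d x0 x0 x0 x1 x0)}"
  proof (rule shatter3)
    show "(mk d x0 x1 x0 x0 x0) \<in> ?V" by (rule mk_V) (use assms in auto)
    show "(mk d x0 x0 x1 x0 x0) \<in> ?V" by (rule mk_V) (use assms in auto)
    show "(mk d x0 x0 x0 x1 x0) \<in> ?V" by (rule mk_V) (use assms in auto)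
    show "\<exists>w\<in>?V. adj' d w (mk d x0 x1 x0 x0 x0) \<and> adj' d w (mk d x0 x0 x1 x0 x0) \<and> adj' d w (mk d x0 x0 x0 x1 x0)"
      by (rule bexI[of _ "(mk d x0 x0 x0 x0 x0)"]) (use assms in \<open>simp_all add: mk_adj mk_V\<close>)
    show "\<exists>w\<in>?V. adj' d w (mk d x0 x1 x0 x0 x0) \<and> adj' d w (mk d x0 x0 x1 x0 x0) \<and> \<not> adj' d w (mk d x0 x0 x0 x1 x0)"
      by (rule bexI[of _ "(mk d x0 x1 x1 x0 x0)"]) (use assms in \<open>simp_all add: mk_adj mk_V\<close>)
    show "\<exists>w\<in>?V. adj' d w (mk d x0 x1 x0 x0 x0) \<and> \<not> adj' d w (mk d x0 x0 x1 x0 x0) \<and> adj' d w (mk d x0 x0 x0 x1 x0)"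
      by (rule bexI[of _ "(mk d x0 x1 x0 x1 x0)"]) (use assms in \<open>simp_all add: mk_adj mk_V\<close>)
    show "\<exists>w\<in>?V. adj' d w (mk d x0 x1 x0 x0 x0) \<and> \<not> adj' d w (mk d x0 x0 x1 x0 x0) \<and> \<not> adj' d w (mk d x0 x0 x0 x1 x0)"
      by (rule bexI[of _ "(mk d x0 x2 x0 x0 x0)"]) (use assms in \<open>simp_all add: mk_adj mk_V\<close>)
    show "\<exists>w\<in>?V. \<not> adj' d w (mk d x0 x1 x0 x0 x0) \<and> adj' d w (mk d x0 x0 x1 x0 x0) \<and> adj' d w (mk d x0 x0 x0 x1 x0)"
      by (rule bexI[of _ "(mk d x0 x0 x1 x1 x0)"]) (use assms in \<open>simp_all add: mk_adj mk_V\<close>)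
    show "\<exists>w\<in>?V. \<not> adj' d w (mk d x0 x1 x0 x0 x0) \<and> adj' d w (mk d x0 x0 x1 x0 x0) \<and> \<not> adj' d w (mk d x0 x0 x0 x1 x0)"
      by (rule bexI[of _ "(mk d x0 x0 x2 x0 x0)"]) (use assms in \<open>simp_all add: mk_adj mk_V\<close>)
    show "\<exists>w\<in>?V. \<not> adj' d w (mk d x0 x1 x0 x0 x0) \<and> \<not> adj' d w (mk d x0 x0 x1 x0 x0) \<and> adj' d w (mk d x0 x0 x0 x1 x0)"
      by (rule bexI[of _ "(mk d x0 x0 x0 x2 x0)"]) (use assms in \<open>simp_all add: mk_adj mk_V\<close>)
    show "\<exists>w\<in>?V. \<not> adj' d w (mk d x0 x1 x0 x0 x0) \<and> \<not> adj' d w (mk d x0 x0 x1 x0 x0) \<and> \<not> adj' d w (mk d x0 x0 x0 x1 x0)"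
      by (rule bexI[of _ "(mk d x0 x1 x0 x0 x0)"]) (use assms in \<open>simp_all add: mk_adj mk_V\<close>)
  qed
  moreover have "card {(mk d x0 x1 x0 x0 x0), (mk d x0 x0 x1 x0 x0), (mk d x0 x0 x0 x1 x0)} = 3"
    using assms by (simp add: mk_neq)
  ultimately show ?thesis by blast
qed

lemma cons3:
  assumes "4 \<le> d" and "x0 \<in> S" and "x1 \<in> S" and "x0 \<noteq> x1"
  shows "\<exists>A. edge_shatters (hamming_vertices d S) (hamming_adj d) A \<and> card A = 3"
proof -
  let ?V = "hamming_vertices d S"
  have "edge_shatters ?V (hamming_adj d) {(mk d x0 x1 x0 x0 x0), (mk d x0 x0 x1 x0 x0), (mk d x0 x0 x0 x1 x0)}"
  proof (rule shatter3)
    show "(mk d x0 x1 x0 x0 x0) \<in> ?V" by (rule mk_V) (use assms in auto)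
    show "(mk d x0 x0 x1 x0 x0) \<in> ?V" by (rule mk_V) (use assms in auto)
    show "(mk d x0 x0 x0 x1 x0) \<in> ?V" by (rule mk_V) (use assms in auto)
    show "\<exists>w\<in>?V. adj' d w (mk d x0 x1 x0 x0 x0) \<and> adj' d w (mk d x0 x0 x1 x0 x0) \<and> adj' d w (mk d x0 x0 x0 x1 x0)"
      by (rule bexI[of _ "(mk d x0 x0 x0 x0 x0)"]) (use assms in \<open>simp_all add: mk_adj mk_V\<close>)
    show "\<exists>w\<in>?V. adj' d w (mk d x0 x1 x0 x0 x0) \<and> adj' d w (mk d x0 x0 x1 x0 x0) \<and> \<not> adj' d w (mk d x0 x0 x0 x1 x0)"
      by (rule bexI[of _ "(mk d x0 x1 x1 x0 x0)"]) (use assms in \<open>simp_all add: mk_adj mk_V\<close>)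
    show "\<exists>w\<in>?V. adj' d w (mk d x0 x1 x0 x0 x0) \<and> \<not> adj' d w (mk d x0 x0 x1 x0 x0) \<and> adj' d w (mk d x0 x0 x0 x1 x0)"
      by (rule bexI[of _ "(mk d x0 x1 x0 x1 x0)"]) (use assms in \<open>simp_all add: mk_adj mk_V\<close>)
    show "\<exists>w\<in>?V. adj' d w (mk d x0 x1 x0 x0 x0) \<and> \<not> adj' d w (mk d x0 x0 x1 x0 x0) \<and> \<not> adj' d w (mk d x0 x0 x0 x1 x0)"
      by (rule bexI[of _ "(mk d x0 x1 x0 x0 x1)"]) (use assms in \<open>simp_all add: mk_adj mk_V\<close>)
    show "\<exists>w\<in>?V. \<not> adj' d w (mk d x0 x1 x0 x0 x0) \<and> adj' d w (mk d x0 x0 x1 x0 x0) \<and> adj' d w (mk d x0 x0 x0 x1 x0)"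
      by (rule bexI[of _ "(mk d x0 x0 x1 x1 x0)"]) (use assms in \<open>simp_all add: mk_adj mk_V\<close>)
    show "\<exists>w\<in>?V. \<not> adj' d w (mk d x0 x1 x0 x0 x0) \<and> adj' d w (mk d x0 x0 x1 x0 x0) \<and> \<not> adj' d w (mk d x0 x0 x0 x1 x0)"
      by (rule bexI[of _ "(mk d x0 x0 x1 x0 x1)"]) (use assms in \<open>simp_all add: mk_adj mk_V\<close>)
    show "\<exists>w\<in>?V. \<not> adj' d w (mk d x0 x1 x0 x0 x0) \<and> \<not> adj' d w (mk d x0 x0 x1 x0 x0) \<and> adj' d w (mk d x0 x0 x0 x1 x0)"
      by (rule bexI[of _ "(mk d x0 x0 x0 x1 x1)"]) (use assms in \<open>simp_all add: mk_adj mk_V\<close>)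
    show "\<exists>w\<in>?V. \<not> adj' d w (mk d x0 x1 x0 x0 x0) \<and> \<not> adj' d w (mk d x0 x0 x1 x0 x0) \<and> \<not> adj' d w (mk d x0 x0 x0 x1 x0)"
      by (rule bexI[of _ "(mk d x0 x1 x0 x0 x0)"]) (use assms in \<open>simp_all add: mk_adj mk_V\<close>)
  qed
  moreover have "card {(mk d x0 x1 x0 x0 x0), (mk d x0 x0 x1 x0 x0), (mk d x0 x0 x0 x1 x0)} = 3"
    using assms by (simp add: mk_neq)
  ultimately show ?thesis by blast
qed

lemma cons2:
  assumes "2 \<le> d" and "x0 \<in> S" and "x1 \<in> S" and "x2 \<in> S" and "x3 \<in> S" and "x0 \<noteq> x1" and "x0 \<noteq> x2" and "x1 \<noteq> x2" and "x0 \<noteq> x3" and "x1 \<noteq> x3" and "x2 \<noteq> x3"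
  shows "\<exists>A. edge_shatters (hamming_vertices d S) (hamming_adj d) A \<and> card A = 3"
proof -
  let ?V = "hamming_vertices d S"
  have "edge_shatters ?V (hamming_adj d) {(mk d x0 x1 x0 x0 x0), (mk d x0 x2 x0 x0 x0), (mk d x0 x0 x1 x0 x0)}"
  proof (rule shatter3)
    show "(mk d x0 x1 x0 x0 x0) \<in> ?V" by (rule mk_V) (use assms in auto)
    show "(mk d x0 x2 x0 x0 x0) \<in> ?V" by (rule mk_V) (use assms in auto)
    show "(mk d x0 x0 x1 x0 x0) \<in> ?V" by (rule mk_V) (use assms in auto)
    show "\<exists>w\<in>?V. adj' d w (mk d x0 x1 x0 x0 x0) \<and> adj' d w (mk d x0 x2 x0 x0 x0) \<and> adj' d w (mk d x0 x0 x1 x0 x0)"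
      by (rule bexI[of _ "(mk d x0 x0 x0 x0 x0)"]) (use assms in \<open>simp_all add: mk_adj mk_V\<close>)
    show "\<exists>w\<in>?V. adj' d w (mk d x0 x1 x0 x0 x0) \<and> adj' d w (mk d x0 x2 x0 x0 x0) \<and> \<not> adj' d w (mk d x0 x0 x1 x0 x0)"
      by (rule bexI[of _ "(mk d x0 x3 x0 x0 x0)"]) (use assms in \<open>simp_all add: mk_adj mk_V\<close>)
    show "\<exists>w\<in>?V. adj' d w (mk d x0 x1 x0 x0 x0) \<and> \<not> adj' d w (mk d x0 x2 x0 x0 x0) \<and> adj' d w (mk d x0 x0 x1 x0 x0)"
      by (rule bexI[of _ "(mk d x0 x1 x1 x0 x0)"]) (use assms in \<open>simp_all add: mk_adj mk_V\<close>)
    show "\<exists>w\<in>?V. adj' d w (mk d x0 x1 x0 x0 x0) \<and> \<not> adj' d w (mk d x0 x2 x0 x0 x0) \<and> \<not> adj' d w (mk d x0 x0 x1 x0 x0)"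
      by (rule bexI[of _ "(mk d x0 x1 x2 x0 x0)"]) (use assms in \<open>simp_all add: mk_adj mk_V\<close>)
    show "\<exists>w\<in>?V. \<not> adj' d w (mk d x0 x1 x0 x0 x0) \<and> adj' d w (mk d x0 x2 x0 x0 x0) \<and> adj' d w (mk d x0 x0 x1 x0 x0)"
      by (rule bexI[of _ "(mk d x0 x2 x1 x0 x0)"]) (use assms in \<open>simp_all add: mk_adj mk_V\<close>)
    show "\<exists>w\<in>?V. \<not> adj' d w (mk d x0 x1 x0 x0 x0) \<and> adj' d w (mk d x0 x2 x0 x0 x0) \<and> \<not> adj' d w (mk d x0 x0 x1 x0 x0)"
      by (rule bexI[of _ "(mk d x0 x2 x2 x0 x0)"]) (use assms in \<open>simp_all add: mk_adj mk_V\<close>)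
    show "\<exists>w\<in>?V. \<not> adj' d w (mk d x0 x1 x0 x0 x0) \<and> \<not> adj' d w (mk d x0 x2 x0 x0 x0) \<and> adj' d w (mk d x0 x0 x1 x0 x0)"
      by (rule bexI[of _ "(mk d x0 x3 x1 x0 x0)"]) (use assms in \<open>simp_all add: mk_adj mk_V\<close>)
    show "\<exists>w\<in>?V. \<not> adj' d w (mk d x0 x1 x0 x0 x0) \<and> \<not> adj' d w (mk d x0 x2 x0 x0 x0) \<and> \<not> adj' d w (mk d x0 x0 x1 x0 x0)"
      by (rule bexI[of _ "(mk d x0 x0 x1 x0 x0)"]) (use assms in \<open>simp_all add: mk_adj mk_V\<close>)
  qed
  moreover have "card {(mk d x0 x1 x0 x0 x0), (mk d x0 x2 x0 x0 x0), (mk d x0 x0 x1 x0 x0)} = 3"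
    using assms by (simp add: mk_neq)
  ultimately show ?thesis by blast
qed


lemma pattern:
  assumes "edge_shatters V (hamming_adj d) A" "B \<subseteq> A"
  shows "\<exists>w\<in>V. \<forall>x\<in>A. adj' d w x = (x\<in>B)"
proof -
  have "B \<in> (\<lambda>v. A \<inter> nbhd V (hamming_adj d) v) ` V" using assms unfolding edge_shatters_def by blast
  then obtain w where "w \<in> V" "B = A \<inter> nbhd V (hamming_adj d) w" by blast
  moreover have "A \<subseteq> V" using assms unfolding edge_shatters_def by blast
  ultimately show ?thesis unfolding nbhd_def adj_eq by blast
qed

lemma four_elems:
  assumes "4 \<le> card A"
  shows "\<exists>a b c e. a \<in> A \<and> b \<in> A \<and> c \<in> A \<and> e \<in> A \<and> a \<noteq> b \<and> a \<noteq> c \<and> a \<noteq> e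
    \<and> b \<noteq> c \<and> b \<noteq> e \<and> c \<noteq> e"
proof -
  obtain a A1 where 1: "A = insert a A1" "a \<notin> A1" "3 \<le> card A1"
    using assms card_le_Suc_iff[of 3 A] by auto
  obtain b A2 where 2: "A1 = insert b A2" "b \<notin> A2" "2 \<le> card A2"
    using 1 card_le_Suc_iff[of 2 A1] by auto
  obtain c A3 where 3: "A2 = insert c A3" "c \<notin> A3" "1 \<le> card A3"
    using 2 card_le_Suc_iff[of 1 A2] by auto
  obtain e A4 where 4: "A3 = insert e A4" "e \<notin> A4"
    using 3 card_le_Suc_iff[of 0 A3] by auto
  show ?thesis using 1 2 3 4 by blast
qed

lemma card_bound:
  assumes "edge_shatters (hamming_vertices d S) (hamming_adj d) A"
  shows "card A \<le> 3"
proof (rule ccontr)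
  assume "\<not> card A \<le> 3"
  then have "4 \<le> card A" by linarith
  then obtain a b c e where abce: "a \<in> A" "b \<in> A" "c \<in> A" "e \<in> A" "a \<noteq> b" "a \<noteq> c" "a \<noteq> e"
    "b \<noteq> c" "b \<noteq> e" "c \<noteq> e" using four_elems[of A] by blast
  have AV: "A \<subseteq> hamming_vertices d S" using assms unfolding edge_shatters_def by blast
  show False
  proof (rule no4[of a d S b c e])
    fix B assume "B \<subseteq> {a,b,c,e}"
    then have "B \<subseteq> A" using abce by blast
    then obtain w where "\<forall>x\<in>A. adj' d w x = (x\<in>B)" using pattern[OF assms] by blast
    moreover have "{a,b,c,e} \<subseteq> A" using abce by blast
    ultimately show "\<exists>w. \<forall>x\<in>{a,b,c,e}. adj' d w x = (x\<in>B)" by blast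
  qed (use abce AV in auto)
qed

lemma card3_cond:
  assumes fin: "finite S" and "edge_shatters (hamming_vertices d S) (hamming_adj d) A" "card A = 3"
  shows "(d \<ge> 3 \<and> card S \<ge> 3) \<or> (d \<ge> 2 \<and> card S \<ge> 4) \<or> (d \<ge> 4 \<and> card S \<ge> 2)"
proof -
  obtain a b c where abc: "A = {a,b,c}" "a \<noteq> b" "b \<noteq> c" "a \<noteq> c" using assms(3) card_3_iff by metis
  have AV: "A \<subseteq> hamming_vertices d S" using assms unfolding edge_shatters_def by blast
  show ?thesis
  proof (rule no3[OF fin, of a d b c])
    fix B assume "B \<subseteq> {a,b,c}"
    then show "\<exists>w\<in>hamming_vertices d S. \<forall>x\<in>{a,b,c}. adj' d w x = (x\<in>B)"
      using pattern[OF assms(2), of B] abc by auto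
  qed (use abc AV in auto)
qed

theorem mainTheorem17:
  fixes d q :: nat and S :: "'a set"
  assumes "finite S" and "card S = q"
  shows "vc_dim_edge (hamming_vertices d S) (hamming_adj d) = 3 \<longleftrightarrow>
           ((d \<ge> 3 \<and> q \<ge> 3) \<or> (d \<ge> 2 \<and> q \<ge> 4) \<or> (d \<ge> 4 \<and> q \<ge> 2))"
proof -
  let ?K = "{card A | A. edge_shatters (hamming_vertices d S) (hamming_adj d) A}"
  have bnd: "\<forall>x\<in>?K. x \<le> 3" using card_bound by blast
  show ?thesis
  proof
    assume h: "vc_dim_edge (hamming_vertices d S) (hamming_adj d) = 3"
    then have sup: "Sup ?K = 3" unfolding vc_dim_edge_def by simp
    have "3 \<in> ?K"
    proof (rule ccontr)
      assume n3: "3 \<notin> ?K"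
      have "?K \<noteq> {}" using sup by (metis Sup_nat_empty zero_neq_numeral)
      moreover have "\<forall>x\<in>?K. x \<le> 2"
      proof
        fix x assume "x \<in> ?K"
        then have "x \<le> 3" "x \<noteq> 3" using bnd n3 by blast+
        then show "x \<le> 2" by linarith
      qed
      ultimately have "Sup ?K \<le> 2" by (meson cSup_least)
      then show False using sup by simp
    qed
    then obtain A where "edge_shatters (hamming_vertices d S) (hamming_adj d) A" "card A = 3" by auto
    then show "(d \<ge> 3 \<and> q \<ge> 3) \<or> (d \<ge> 2 \<and> q \<ge> 4) \<or> (d \<ge> 4 \<and> q \<ge> 2)"
      using card3_cond[OF assms(1)] assms(2) by blast
  next
    assume c: "(d \<ge> 3 \<and> q \<ge> 3) \<or> (d \<ge> 2 \<and> q \<ge> 4) \<or> (d \<ge> 4 \<and> q \<ge> 2)"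
    have "\<exists>A. edge_shatters (hamming_vertices d S) (hamming_adj d) A \<and> card A = 3"
    proof -
      { assume "d \<ge> 3" "q \<ge> 3"
        then obtain T where "T \<subseteq> S" "card T = 3" using obtain_subset_with_card_n assms(2) by metis
        then obtain x0 x1 x2 where "T = {x0,x1,x2}" "x0 \<noteq> x1" "x1 \<noteq> x2" "x0 \<noteq> x2"
          using card_3_iff by metis
        have ?thesis by (rule cons1[of d x0 S x1 x2]) (use \<open>T = {x0,x1,x2}\<close> \<open>x0 \<noteq> x1\<close> \<open>x1 \<noteq> x2\<close> \<open>x0 \<noteq> x2\<close> \<open>T \<subseteq> S\<close> \<open>d \<ge> 3\<close> in auto) }
      moreover
      { assume "d \<ge> 4" "q \<ge> 2"
        then obtain T where "T \<subseteq> S" "card T = 2" using obtain_subset_with_card_n assms(2) by metis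
        then obtain x0 x1 where "T = {x0,x1}" "x0 \<noteq> x1"
          using card_2_iff by metis
        have ?thesis by (rule cons3[of d x0 S x1]) (use \<open>T = {x0,x1}\<close> \<open>x0 \<noteq> x1\<close> \<open>T \<subseteq> S\<close> \<open>d \<ge> 4\<close> in auto) }
      moreover
      { assume "d \<ge> 2" "q \<ge> 4"
        then obtain T where "T \<subseteq> S" "card T = 4" using obtain_subset_with_card_n assms(2) by metis
        then obtain x0 A1 where 1: "T = insert x0 A1" "x0 \<notin> A1" "card A1 = 3"
          using card_eq_SucD[of T 3] by auto
        then obtain x1 x2 x3 where "A1 = {x1,x2,x3}" "x1 \<noteq> x2" "x2 \<noteq> x3" "x1 \<noteq> x3"
          using card_3_iff by metis
        have ?thesis by (rule cons2[of d x0 S x1 x2 x3]) (use 1 \<open>A1 = {x1,x2,x3}\<close> \<open>x1 \<noteq> x2\<close> \<open>x2 \<noteq> x3\<close> \<open>x1 \<noteq> x3\<close> \<open>T \<subseteq> S\<close> \<open>d \<ge> 2\<close> in auto) }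
      ultimately show ?thesis using c by blast
    qed
    then have "3 \<in> ?K" by auto
    then have "Sup ?K = 3" using bnd by (meson cSup_eq_maximum)
    then show "vc_dim_edge (hamming_vertices d S) (hamming_adj d) = 3" unfolding vc_dim_edge_def by simp
  qed
qed

end
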